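(* Let $E\subset F$ be differential fields of characteristic zero with the same algebraically closed field of constants $C$. Suppose there is $x\in E$ with $x'=1$, and let $y,z\in F$ be such that $y'\in E$, $y$ is transcendental over $E$, $z\in E(y)$ and $z'=y$. Then $z=Ay+B$ for some $A,B\in E$. *)

theory Defs
  imports "HOL-Computational_Algebra.Polynomial"
begin

definition derivation :: "('a::field \<Rightarrow> 'a) \<Rightarrow> bool" where
  "derivation D \<longleftrightarrow> (\<forall>a b. D (a + b) = D a + D b) \<and> (\<forall>a b. D (a * b) = D a * b + a * D b)"

definition is_subfield :: "'a::field set \<Rightarrow> bool" where
  "is_subfield K \<longleftrightarrow> 0 \<in> K \<and> 1 \<in> K \<and> (\<forall>a\<in>K. \<forall>b\<in>K. a + b \<in> K \<and> a * b \<in> K)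
     \<and> (\<forall>a\<in>K. - a \<in> K) \<and> (\<forall>a\<in>K. a \<noteq> 0 \<longrightarrow> inverse a \<in> K)"

definition differential_subfield :: "('a::field \<Rightarrow> 'a) \<Rightarrow> 'a set \<Rightarrow> bool" where
  "differential_subfield D E \<longleftrightarrow> is_subfield E \<and> (\<forall>a\<in>E. D a \<in> E)"

definition constants :: "('a::field \<Rightarrow> 'a) \<Rightarrow> 'a set" where
  "constants D = {c. D c = 0}"

definition field_adjoin :: "'a::field set \<Rightarrow> 'a \<Rightarrow> 'a set" where
  "field_adjoin E y = \<Inter>{K. is_subfield K \<and> E \<subseteq> K \<and> y \<in> K}"

definition transcendental_over :: "'a::field set \<Rightarrow> 'a \<Rightarrow> bool" where
  "transcendental_over E y \<longleftrightarrow> (\<forall>p. p \<noteq> 0 \<and> set (coeffs p) \<subseteq> E \<longrightarrow> poly p y \<noteq> 0)"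

definition alg_closed_subfield :: "'a::field set \<Rightarrow> bool" where
  "alg_closed_subfield C \<longleftrightarrow> is_subfield C \<and>
     (\<forall>p. set (coeffs p) \<subseteq> C \<and> degree p \<ge> 1 \<longrightarrow> (\<exists>c\<in>C. poly p c = 0))"

end

theory Submission
  imports Defs
begin

definition inE :: "'a::field set \<Rightarrow> 'a poly \<Rightarrow> bool" where
  "inE E p \<longleftrightarrow> (\<forall>i. coeff p i \<in> E)"

lemma der_0: "derivation D \<Longrightarrow> D 0 = 0"
  unfolding derivation_def by (metis add_cancel_right_right add_0)

lemma der_1: "derivation D \<Longrightarrow> D 1 = 0"
  unfolding derivation_def by (metis add_cancel_right_right mult_1 mult_1_right)

lemma der_add: "derivation D \<Longrightarrow> D (a + b) = D a + D b"
  unfolding derivation_def by blast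

lemma der_mult: "derivation D \<Longrightarrow> D (a * b) = D a * b + a * D b"
  unfolding derivation_def by blast

lemma der_uminus: "derivation D \<Longrightarrow> D (- a) = - D a"
  using der_add[of D a "-a"] der_0[of D] by (simp add: eq_neg_iff_add_eq_0 add.commute)

lemma der_diff: "derivation D \<Longrightarrow> D (a - b) = D a - D b"
  using der_add[of D a "-b"] der_uminus[of D b] by simp

lemma der_of_nat: "derivation D \<Longrightarrow> D (of_nat n) = 0"
  by (induction n) (simp_all add: der_0 der_1 der_add)

lemma der_of_nat_mult: "derivation D \<Longrightarrow> D (of_nat n * t) = of_nat n * D t"
  by (simp add: der_mult der_of_nat)

lemma der_poly:
  assumes "derivation D"
  shows "D (poly p t) = poly (map_poly D p) t + poly (pderiv p) t * D t"
proof (induction p)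
  case (pCons c p)
  have "D (poly (pCons c p) t) = D c + (D t * poly p t + t * D (poly p t))"
    using assms by (simp add: der_add der_mult)
  also have "\<dots> = poly (map_poly D (pCons c p)) t + poly (pderiv (pCons c p)) t * D t"
    using pCons.IH assms by (simp add: map_poly_pCons der_0 pderiv_pCons algebra_simps)
  finally show ?case .
qed (simp add: assms der_0)

lemma sf_sum: assumes "is_subfield E" "finite A" "\<forall>i\<in>A. f i \<in> E" shows "sum f A \<in> E"
  using assms(2,3) by (induction A rule: finite_induct) (use assms(1) in \<open>auto simp: is_subfield_def\<close>)

lemma sf_diff: "is_subfield E \<Longrightarrow> a \<in> E \<Longrightarrow> b \<in> E \<Longrightarrow> a - b \<in> E"
  unfolding is_subfield_def by (metis diff_conv_add_uminus)

lemma sf_div: "is_subfield E \<Longrightarrow> a \<in> E \<Longrightarrow> b \<in> E \<Longrightarrow> a / b \<in> E"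
  unfolding is_subfield_def by (metis divide_inverse inverse_zero)

lemma sf_of_nat: "is_subfield E \<Longrightarrow> of_nat n \<in> E"
  by (induction n) (auto simp: is_subfield_def)

lemma inE_add: "is_subfield E \<Longrightarrow> inE E p \<Longrightarrow> inE E q \<Longrightarrow> inE E (p + q)"
  by (auto simp: inE_def is_subfield_def)

lemma inE_uminus: "is_subfield E \<Longrightarrow> inE E p \<Longrightarrow> inE E (- p)"
  by (auto simp: inE_def is_subfield_def)

lemma inE_diff: "is_subfield E \<Longrightarrow> inE E p \<Longrightarrow> inE E q \<Longrightarrow> inE E (p - q)"
  by (auto simp: inE_def sf_diff)

lemma inE_mult: "is_subfield E \<Longrightarrow> inE E p \<Longrightarrow> inE E q \<Longrightarrow> inE E (p * q)"
  unfolding inE_def coeff_mult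
  by (intro allI sf_sum) (auto simp: is_subfield_def)

lemma inE_smult: "is_subfield E \<Longrightarrow> c \<in> E \<Longrightarrow> inE E p \<Longrightarrow> inE E (smult c p)"
  by (auto simp: inE_def is_subfield_def)

lemma inE_const: "is_subfield E \<Longrightarrow> c \<in> E \<Longrightarrow> inE E [:c:]"
  by (auto simp: inE_def is_subfield_def coeff_pCons')

lemma inE_pCons: "is_subfield E \<Longrightarrow> c \<in> E \<Longrightarrow> inE E p \<Longrightarrow> inE E (pCons c p)"
  by (auto simp: inE_def coeff_pCons')

lemma inE_one: "is_subfield E \<Longrightarrow> inE E 1"
  by (simp add: inE_const is_subfield_def one_pCons)

lemma inE_X: "is_subfield E \<Longrightarrow> inE E [:0,1:]"
  by (simp add: inE_pCons inE_const is_subfield_def)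

lemma inE_map: "is_subfield E \<Longrightarrow> derivation D \<Longrightarrow> (\<forall>a\<in>E. D a \<in> E) \<Longrightarrow> inE E p \<Longrightarrow> inE E (map_poly D p)"
  by (auto simp: inE_def coeff_map_poly der_0)

lemma inE_pderiv: "is_subfield E \<Longrightarrow> inE E p \<Longrightarrow> inE E (pderiv p)"
  by (auto simp: inE_def coeff_pderiv is_subfield_def sf_of_nat)

lemma inE_coeffs: "inE E p \<Longrightarrow> set (coeffs p) \<subseteq> E"
  by (auto simp: inE_def coeffs_def)

lemma trans_zero: "transcendental_over E y \<Longrightarrow> inE E p \<Longrightarrow> poly p y = 0 \<Longrightarrow> p = 0"
  using inE_coeffs unfolding transcendental_over_def by blast

lemma trans_notin: "is_subfield E \<Longrightarrow> transcendental_over E y \<Longrightarrow> y \<notin> E"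
proof
  assume "is_subfield E" "transcendental_over E y" "y \<in> E"
  then have "inE E [:-y,1:]" by (simp add: inE_pCons inE_const is_subfield_def)
  from trans_zero[OF \<open>transcendental_over E y\<close> this] show False by simp
qed

lemma adjoin_rep:
  assumes E: "is_subfield E" and tr: "transcendental_over E y"
  shows "field_adjoin E y \<subseteq> {z. \<exists>p q. inE E p \<and> inE E q \<and> poly q y \<noteq> 0 \<and> z = poly p y / poly q y}"
    (is "_ \<subseteq> ?S")
proof -
  have E0: "0 \<in> E" and E1: "1 \<in> E" using E by (auto simp: is_subfield_def)
  have "is_subfield ?S"
    unfolding is_subfield_def
  proof (intro conjI ballI impI)
    show "0 \<in> ?S" using inE_one[OF E] inE_const[OF E E0] by (intro CollectI exI[of _ 0] exI[of _ 1]) auto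
    show "1 \<in> ?S" using inE_one[OF E] by (intro CollectI exI[of _ 1] exI[of _ 1]) auto
  next
    fix a b assume "a \<in> ?S" "b \<in> ?S"
    then obtain p1 q1 p2 q2 where h: "inE E p1" "inE E q1" "poly q1 y \<noteq> 0" "a = poly p1 y / poly q1 y"
      "inE E p2" "inE E q2" "poly q2 y \<noteq> 0" "b = poly p2 y / poly q2 y" by blast
    show "a + b \<in> ?S"
      using h by (intro CollectI exI[of _ "p1 * q2 + p2 * q1"] exI[of _ "q1 * q2"])
        (auto simp: inE_add inE_mult E add_frac_eq)
    show "a * b \<in> ?S"
      using h by (intro CollectI exI[of _ "p1 * p2"] exI[of _ "q1 * q2"])
        (auto simp: inE_add inE_mult E)
  next
    fix a assume "a \<in> ?S"
    then obtain p1 q1 where h: "inE E p1" "inE E q1" "poly q1 y \<noteq> 0" "a = poly p1 y / poly q1 y" by blast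
    show "- a \<in> ?S"
      using h by (intro CollectI exI[of _ "- p1"] exI[of _ "q1"]) (auto simp: inE_uminus E)
    assume "a \<noteq> 0"
    then show "inverse a \<in> ?S"
      using h by (intro CollectI exI[of _ "q1"] exI[of _ "p1"]) (auto simp: inverse_eq_divide)
  qed
  moreover have "E \<subseteq> ?S"
  proof
    fix e assume "e \<in> E"
    then show "e \<in> ?S" using inE_one[OF E] inE_const[OF E]
      by (intro CollectI exI[of _ "[:e:]"] exI[of _ 1]) auto
  qed
  moreover have "y \<in> ?S" using inE_one[OF E] inE_X[OF E]
      by (intro CollectI exI[of _ "[:0,1:]"] exI[of _ 1]) auto
  ultimately show ?thesis unfolding field_adjoin_def by blast
qed

lemma mk_monic:
  assumes E: "is_subfield E" and h: "inE E p" "inE E q" "q \<noteq> 0" "z * poly q y = poly p y"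
  shows "\<exists>p' q'. inE E p' \<and> inE E q' \<and> lead_coeff q' = 1 \<and> degree q' = degree q \<and> z * poly q' y = poly p' y"
proof -
  define c where "c = lead_coeff q"
  have c0: "c \<noteq> 0" using h(3) by (simp add: c_def)
  have cE: "inverse c \<in> E" using h(2) c0 E unfolding c_def inE_def is_subfield_def by blast
  show ?thesis
  proof (intro exI conjI)
    show "inE E (smult (inverse c) p)" "inE E (smult (inverse c) q)"
      using cE h E by (auto simp: inE_smult)
    show "lead_coeff (smult (inverse c) q) = 1" using c0 by (simp add: c_def)
    show "degree (smult (inverse c) q) = degree q" using c0 by simp
    show "z * poly (smult (inverse c) q) y = poly (smult (inverse c) p) y"
      using h(4) by (simp add: algebra_simps)
  qed
qed

lemma poly_case:
  fixes D :: "'a::field_char_0 \<Rightarrow> 'a"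
  assumes D: "derivation D" and E: "is_subfield E" and DE: "\<forall>a\<in>E. D a \<in> E"
    and C: "constants D \<subseteq> E" and x: "x \<in> E" "D x = 1"
    and a: "D y \<in> E" and tr: "transcendental_over E y"
    and p: "inE E p" and Dz: "D (poly p y) = y"
  shows "\<exists>A\<in>E. \<exists>B\<in>E. poly p y = A * y + B"
proof -
  define P where "P = map_poly D p + smult (D y) (pderiv p) - [:0,1:]"
  have "inE E P" unfolding P_def
    by (intro inE_diff inE_add inE_smult inE_map inE_pderiv inE_X E D DE p a)
  moreover have "poly P y = 0" using Dz der_poly[OF D, of p y] by (simp add: P_def mult.commute)
  ultimately have P0: "P = 0" using trans_zero[OF tr] by blast
  have X: "coeff [:0,1:] i = (if i = 1 then 1 else (0::'a))" for i
    by (cases i; cases "i - 1") (auto simp: coeff_pCons')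
  have co: "D (coeff p i) + D y * (of_nat (Suc i) * coeff p (Suc i)) = (if i = 1 then 1 else 0)" for i
  proof -
    have "coeff P i = 0" using P0 by simp
    then show ?thesis unfolding P_def by (simp add: coeff_map_poly der_0[OF D] coeff_pderiv X)
  qed
  have yE: "y \<notin> E" using trans_notin[OF E tr] .
  have deg: "degree p \<le> 1"
  proof (rule ccontr)
    assume "\<not> degree p \<le> 1"
    define m where "m = degree p"
    have m2: "m \<ge> 2" using \<open>\<not> degree p \<le> 1\<close> by (simp add: m_def)
    define c where "c = coeff p m"
    define c1 where "c1 = coeff p (m - 1)"
    have "p \<noteq> 0" using m2 m_def by auto
    then have c0: "c \<noteq> 0" by (simp add: c_def m_def)
    have "coeff p (Suc m) = 0" by (simp add: m_def coeff_eq_0)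
    then have Dc: "D c = 0" using co[of m] m2 by (simp add: c_def)
    have Sm: "Suc (m - 1) = m" using m2 by simp
    have e1: "D c1 + D y * (of_nat m * c) = (if m = 2 then 1 else 0)"
    proof -
      have "(m - 1 = 1) = (m = 2)" using m2 by arith
      then show ?thesis using co[of "m - 1"] Sm by (simp add: c_def c1_def)
    qed
    define w where "w = c1 + of_nat m * c * y - (if m = 2 then x else 0)"
    have "D (of_nat m * c * y) = of_nat m * c * D y"
      using D Dc by (simp add: der_mult der_of_nat)
    then have "D w = 0" unfolding w_def using D e1 x(2) der_0[OF D]
      by (simp add: der_add der_diff algebra_simps)
    then have wE: "w \<in> E" using C by (auto simp: constants_def)
    have c1E: "c1 \<in> E" and cE: "c \<in> E" using p by (auto simp: inE_def c1_def c_def)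
    have mc: "of_nat m * c \<noteq> 0" using c0 m2 by simp
    have "y = (w - c1 + (if m = 2 then x else 0)) / (of_nat m * c)"
      using mc by (simp add: w_def field_simps)
    moreover have "(w - c1 + (if m = 2 then x else 0)) / (of_nat m * c) \<in> E"
      using E wE c1E cE x(1) sf_of_nat[OF E, of m]
      by (intro sf_div sf_diff) (auto simp: is_subfield_def sf_diff)
    ultimately show False using yE by simp
  qed
  have "p = [:coeff p 0, coeff p 1:]"
  proof (rule poly_eqI)
    fix i show "coeff p i = coeff [:coeff p 0, coeff p 1:] i"
      using deg by (cases i; cases "i - 1") (auto simp: coeff_pCons' coeff_eq_0)
  qed
  then have "poly p y = coeff p 1 * y + coeff p 0" by (metis poly_pCons poly_0 mult_zero_right add_0_right mult.commute add.commute)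
  then show ?thesis using p by (auto simp: inE_def)
qed

theorem lemma30:
  fixes D :: "'a::field_char_0 \<Rightarrow> 'a" and E :: "'a set" and x y z :: 'a
  assumes "derivation D"
    and "differential_subfield D E"
    and "constants D \<subseteq> E"
    and "alg_closed_subfield (constants D)"
    and "x \<in> E" and "D x = 1"
    and "D y \<in> E" and "transcendental_over E y"
    and "z \<in> field_adjoin E y" and "D z = y"
  shows "\<exists>A\<in>E. \<exists>B\<in>E. z = A * y + B"
proof -
  note D = assms(1)
  have E: "is_subfield E" and DE: "\<forall>a\<in>E. D a \<in> E" using assms(2) by (auto simp: differential_subfield_def)
  note C = assms(3) and x = assms(5,6) and a = assms(7) and tr = assms(8) and Dz = assms(10)
  have yE: "y \<notin> E" using trans_notin[OF E tr] .
  define R where "R n \<longleftrightarrow> (\<exists>p q. inE E p \<and> inE E q \<and> lead_coeff q = 1 \<and> degree q = n \<and> z * poly q y = poly p y)" for n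
  have ex: "\<exists>n. R n"
  proof -
    obtain p q where h: "inE E p" "inE E q" "poly q y \<noteq> 0" "z = poly p y / poly q y"
      using adjoin_rep[OF E tr] assms(9) by blast
    then have "q \<noteq> 0" by auto
    moreover have "z * poly q y = poly p y" using h by simp
    ultimately show ?thesis using mk_monic[OF E h(1,2)] unfolding R_def by blast
  qed
  define n0 where "n0 = (LEAST n. R n)"
  have Rn0: "R n0" unfolding n0_def using ex by (rule LeastI_ex)
  have minR: "\<not> R n" if "n < n0" for n using not_less_Least[of n R] that unfolding n0_def by blast
  obtain p q where pq: "inE E p" "inE E q" "lead_coeff q = 1" "degree q = n0" "z * poly q y = poly p y"
    using Rn0 unfolding R_def by blast
  have n00: "n0 = 0"
  proof (rule ccontr)
    assume "n0 \<noteq> 0"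
    define Q where "Q = map_poly D q + smult (D y) (pderiv q)"
    define PP where "PP = map_poly D p + smult (D y) (pderiv p)"
    have dq: "D (poly q y) = poly Q y" using der_poly[OF D, of q y] by (simp add: Q_def mult.commute)
    have dp: "D (poly p y) = poly PP y" using der_poly[OF D, of p y] by (simp add: PP_def mult.commute)
    have "D (z * poly q y) = D (poly p y)" using pq(5) by simp
    then have "y * poly q y + z * poly Q y = poly PP y" using der_mult[OF D] Dz dq dp by simp
    then have zQ: "z * poly Q y = poly (PP - [:0,1:] * q) y" by (simp add: algebra_simps)
    have QE: "inE E Q" unfolding Q_def
      by (intro inE_add inE_smult inE_map inE_pderiv E D DE pq a)
    have PPE: "inE E (PP - [:0,1:] * q)" unfolding PP_def
      by (intro inE_diff inE_mult inE_X inE_add inE_smult inE_map inE_pderiv E D DE pq a)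
    have cQ: "coeff Q i = D (coeff q i) + D y * (of_nat (Suc i) * coeff q (Suc i))" for i
      by (simp add: Q_def coeff_map_poly der_0[OF D] coeff_pderiv)
    show False
    proof (cases "Q = 0")
      case False
      have "degree Q \<le> n0 - 1"
      proof (rule degree_le, intro allI impI)
        fix i assume "n0 - 1 < i"
        then have i: "i \<ge> n0" by simp
        have "coeff q (Suc i) = 0" using i pq(4) by (simp add: coeff_eq_0)
        moreover have "D (coeff q i) = 0"
        proof (cases "i = n0")
          case True then show ?thesis using pq(3,4) der_1[OF D] by simp
        next
          case False then have "coeff q i = 0" using i pq(4) by (simp add: coeff_eq_0)
          then show ?thesis using der_0[OF D] by simp
        qed
        ultimately show "coeff Q i = 0" using cQ[of i] by simp
      qed
      then have "degree Q < n0" using \<open>n0 \<noteq> 0\<close> by simp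
      moreover have "R (degree Q)" using mk_monic[OF E PPE QE False zQ] unfolding R_def by blast
      ultimately show False using minR by blast
    next
      case True
      define c where "c = coeff q (n0 - 1)"
      have Sn: "Suc (n0 - 1) = n0" using \<open>n0 \<noteq> 0\<close> by simp
      have "coeff Q (n0 - 1) = 0" using True by simp
      then have e: "D c + D y * of_nat n0 = 0" using cQ[of "n0 - 1"] Sn pq(3,4) by (simp add: c_def)
      define w where "w = c + of_nat n0 * y"
      have "D w = 0" unfolding w_def using e der_add[OF D] der_of_nat_mult[OF D, of n0 y] by (simp add: mult.commute)
      then have wE: "w \<in> E" using C by (auto simp: constants_def)
      have cE: "c \<in> E" using pq(2) by (simp add: inE_def c_def)
      have "y = (w - c) / of_nat n0" using \<open>n0 \<noteq> 0\<close> by (simp add: w_def field_simps)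
      moreover have "(w - c) / of_nat n0 \<in> E" using E wE cE sf_of_nat[OF E, of n0]
        by (intro sf_div sf_diff) auto
      ultimately show False using yE by simp
    qed
  qed
  obtain c where "q = [:c:]" using degree0_coeffs pq(4) n00 by blast
  then have "q = 1" using pq(3) by (simp add: one_pCons)
  then have zp: "z = poly p y" using pq(5) by simp
  show ?thesis using poly_case[OF D E DE C x a tr pq(1)] Dz zp by simp
qed

end
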